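(* Let $E$ be a Banach lattice. If $E$ has the unbounded Grothendieck property (UGP), then $E$ has the disjoint Grothendieck property (DGP); and if $E$ has the DGP, then $E$ has the weak Grothendieck property (WGP).
   Context: Let $E$ be a Banach lattice with (norm) dual $E'$. Elements $x',y'\in E'$ are disjoint if $|x'|\wedge|y'|=0$; a sequence is disjoint if its terms are pairwise disjoint. A sequence $(x_n')\subseteq E'$ is unbounded weak$^*$ convergent to $x'\in E'$ (written $x_n'\xrightarrow{uaw^*}x'$) if $|x_n'-x'|\wedge u'\to 0$ in the weak$^*$ topology $\sigma(E',E)$ for every $u'\in E'_+$. $E$ has the WGP if every disjoint sequence $(x_n')\subseteq E'$ with $x_n'\to 0$ weak$^*$ satisfies $x_n'\to 0$ weakly (i.e. in $\sigma(E',E'')$). $E$ has the DGP if every norm bounded disjoint sequence $(x_n')\subseteq E'$ satisfies $x_n'\to 0$ weakly. $E$ has the UGP if every norm bounded sequence $(x_n')\subseteq E'$ with $x_n'\xrightarrow{uaw^*}0$ satisfies $x_n'\to0$ weakly. *)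

theory Defs
  imports "HOL-Analysis.Analysis"
begin

class banach_lattice = banach + ordered_real_vector + lattice +
  assumes lattice_norm:
    "sup x (- x) \<le> sup y (- y) \<Longrightarrow> norm x \<le> norm y"

definition labs :: "'a::banach_lattice \<Rightarrow> 'a" where
  "labs x = sup x (- x)"

definition lpos :: "'a::banach_lattice \<Rightarrow> 'a" where
  "lpos x = sup x 0"

definition lneg :: "'a::banach_lattice \<Rightarrow> 'a" where
  "lneg x = sup (- x) 0"

text \<open>The order of E' is the pointwise order on the positive cone; its lattice
  operations are given by the Riesz--Kantorovich formulas. A positive functional
  is determined by its values on the positive cone and is recovered on all of E
  by x \<mapsto> phi(x+) - phi(x-).\<close>

definition dual_nonneg :: "('a::banach_lattice \<Rightarrow>\<^sub>L real) \<Rightarrow> bool" where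
  "dual_nonneg f \<longleftrightarrow> (\<forall>x. 0 \<le> x \<longrightarrow> 0 \<le> blinfun_apply f x)"

definition dual_abs_cone :: "('a::banach_lattice \<Rightarrow>\<^sub>L real) \<Rightarrow> 'a \<Rightarrow> real" where
  "dual_abs_cone f y = Sup {\<bar>blinfun_apply f z\<bar> | z. labs z \<le> y}"

definition dual_inf_cone :: "('a::banach_lattice \<Rightarrow> real) \<Rightarrow> ('a \<Rightarrow> real) \<Rightarrow> 'a \<Rightarrow> real" where
  "dual_inf_cone h u x = Inf {h y + u (x - y) | y. 0 \<le> y \<and> y \<le> x}"

definition cone_ext :: "('a::banach_lattice \<Rightarrow> real) \<Rightarrow> 'a \<Rightarrow> real" where
  "cone_ext \<phi> x = \<phi> (lpos x) - \<phi> (lneg x)"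

definition dual_disjoint :: "('a::banach_lattice \<Rightarrow>\<^sub>L real) \<Rightarrow> ('a \<Rightarrow>\<^sub>L real) \<Rightarrow> bool" where
  "dual_disjoint f g \<longleftrightarrow>
     (\<forall>x. 0 \<le> x \<longrightarrow> dual_inf_cone (dual_abs_cone f) (dual_abs_cone g) x = 0)"

definition disjoint_seq :: "(nat \<Rightarrow> ('a::banach_lattice \<Rightarrow>\<^sub>L real)) \<Rightarrow> bool" where
  "disjoint_seq xs \<longleftrightarrow> (\<forall>m n. m \<noteq> n \<longrightarrow> dual_disjoint (xs m) (xs n))"

definition weak_star_tendsto :: "(nat \<Rightarrow> ('a::banach_lattice \<Rightarrow>\<^sub>L real)) \<Rightarrow> ('a \<Rightarrow>\<^sub>L real) \<Rightarrow> bool" where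
  "weak_star_tendsto xs l \<longleftrightarrow>
     (\<forall>x. (\<lambda>n. blinfun_apply (xs n) x) \<longlonglongrightarrow> blinfun_apply l x)"

definition weak_tendsto :: "(nat \<Rightarrow> ('a::banach_lattice \<Rightarrow>\<^sub>L real)) \<Rightarrow> ('a \<Rightarrow>\<^sub>L real) \<Rightarrow> bool" where
  "weak_tendsto xs l \<longleftrightarrow>
     (\<forall>\<Phi> :: ('a \<Rightarrow>\<^sub>L real) \<Rightarrow>\<^sub>L real.
        (\<lambda>n. blinfun_apply \<Phi> (xs n)) \<longlonglongrightarrow> blinfun_apply \<Phi> l)"

definition uaw_star_tendsto :: "(nat \<Rightarrow> ('a::banach_lattice \<Rightarrow>\<^sub>L real)) \<Rightarrow> ('a \<Rightarrow>\<^sub>L real) \<Rightarrow> bool" where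
  "uaw_star_tendsto xs l \<longleftrightarrow>
     (\<forall>u. dual_nonneg u \<longrightarrow>
        (\<forall>x. (\<lambda>n. cone_ext (dual_inf_cone (dual_abs_cone (xs n - l)) (blinfun_apply u)) x)
               \<longlonglongrightarrow> 0))"

definition norm_bounded_seq :: "(nat \<Rightarrow> ('a::banach_lattice \<Rightarrow>\<^sub>L real)) \<Rightarrow> bool" where
  "norm_bounded_seq xs \<longleftrightarrow> (\<exists>M. \<forall>n. norm (xs n) \<le> M)"

definition WGP :: "'a::banach_lattice itself \<Rightarrow> bool" where
  "WGP _ \<longleftrightarrow> (\<forall>xs :: nat \<Rightarrow> ('a \<Rightarrow>\<^sub>L real).
      disjoint_seq xs \<and> weak_star_tendsto xs 0 \<longrightarrow> weak_tendsto xs 0)"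

definition DGP :: "'a::banach_lattice itself \<Rightarrow> bool" where
  "DGP _ \<longleftrightarrow> (\<forall>xs :: nat \<Rightarrow> ('a \<Rightarrow>\<^sub>L real).
      norm_bounded_seq xs \<and> disjoint_seq xs \<longrightarrow> weak_tendsto xs 0)"

definition UGP :: "'a::banach_lattice itself \<Rightarrow> bool" where
  "UGP _ \<longleftrightarrow> (\<forall>xs :: nat \<Rightarrow> ('a \<Rightarrow>\<^sub>L real).
      norm_bounded_seq xs \<and> uaw_star_tendsto xs 0 \<longrightarrow> weak_tendsto xs 0)"

end

theory Submission
  imports Defs
begin


lemma ubp:
  fixes f :: "nat \<Rightarrow> ('a::banach \<Rightarrow>\<^sub>L real)"
  assumes bd: "\<And>x. \<exists>B. \<forall>n. \<bar>f n x\<bar> \<le> B"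
  shows "\<exists>M. \<forall>n. norm (f n) \<le> M"
proof -
  define A where "A k = {x. \<forall>n. \<bar>f n x\<bar> \<le> real k}" for k :: nat
  have clA: "closed (A k)" for k
  proof -
    have "A k = (\<Inter>n. {x. \<bar>f n x\<bar> \<le> real k})" by (auto simp: A_def)
    moreover have "closed {x. \<bar>f n x\<bar> \<le> real k}" for n
      by (intro closed_Collect_le continuous_intros) 
    ultimately show ?thesis by auto
  qed
  have UA: "\<Union>(range A) = UNIV"
  proof safe
    fix x
    obtain B where "\<forall>n. \<bar>f n x\<bar> \<le> B" using bd by blast
    moreover obtain k where "B \<le> real k" using real_arch_simple by blast
    ultimately have "x \<in> A k" unfolding A_def using order_trans by blast
    then show "x \<in> \<Union>(range A)" by blast
  qed simp
  have "\<exists>k. interior (A k) \<noteq> {}"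
  proof (rule ccontr)
    assume nk: "\<not> ?thesis"
    then have "euclidean interior_of \<Union>(range A) = {}"
    proof (intro Baire_category_alt)
      show "completely_metrizable_space (euclidean::'a topology) \<or> locally_compact_space (euclidean::'a topology) \<and> regular_space (euclidean::'a topology)"
        using completely_metrizable_space_euclidean by blast
      show "countable (range A)" by simp
      fix T assume "T \<in> range A"
      then show "closedin euclidean T \<and> euclidean interior_of T = {}"
        using clA closed_closedin nk by auto
    qed
    then show False using UA by simp
  qed
  then obtain k x0 where "x0 \<in> interior (A k)" by blast
  then obtain r where r: "r > 0" "ball x0 r \<subseteq> A k"
    by (meson open_contains_ball open_interior interior_subset subset_trans)
  have "norm (f n) \<le> 4 * real k / r" for n
  proof (rule norm_blinfun_bound)
    show "0 \<le> 4 * real k / r" using r by simp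
    fix z
    show "norm (f n z) \<le> 4 * real k / r * norm z"
    proof (cases "z = 0")
      case True then show ?thesis by simp
    next
      case False
      define t where "t = (r/2) / norm z"
      have t: "t > 0" using r False by (simp add: t_def)
      have "x0 + t *\<^sub>R z \<in> ball x0 r"
        using r False by (simp add: t_def dist_norm)
      then have h1: "\<bar>f n (x0 + t *\<^sub>R z)\<bar> \<le> real k" using r A_def by blast
      have "x0 \<in> ball x0 r" using r by simp
      then have h2: "\<bar>f n x0\<bar> \<le> real k" using r A_def by blast
      have "f n (x0 + t *\<^sub>R z) = f n x0 + t * f n z"
        by (simp add: blinfun.add_right blinfun.scaleR_right)
      then have "t * \<bar>f n z\<bar> = \<bar>f n (x0 + t *\<^sub>R z) - f n x0\<bar>"
        using t by (simp add: abs_mult)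
      then have "t * \<bar>f n z\<bar> \<le> 2 * real k" using h1 h2 by linarith
      then have "\<bar>f n z\<bar> \<le> 2 * real k / t" using t by (simp add: field_simps)
      also have "2 * real k / t = 4 * real k / r * norm z"
        using r False by (simp add: t_def field_simps)
      finally show ?thesis by simp
    qed
  qed
  then show ?thesis by blast
qed

lemma labs_pos: "0 \<le> (y::'a::banach_lattice) \<Longrightarrow> labs y = y"
  unfolding labs_def by (rule sup_absorb1) (meson neg_le_0_iff_le order_trans)

lemma labs_ge: "(z::'a::banach_lattice) \<le> labs z" "- z \<le> labs z"
  unfolding labs_def by auto

lemma labs_norm: "0 \<le> (y::'a::banach_lattice) \<Longrightarrow> labs z \<le> y \<Longrightarrow> norm z \<le> norm y"
  using lattice_norm[of z y] labs_pos[of y] unfolding labs_def by simp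

lemma labs_zero: "labs (0::'a::banach_lattice) = 0"
  unfolding labs_def by simp

lemma labs_le_zero: "labs (z::'a::banach_lattice) \<le> 0 \<Longrightarrow> z = 0"
proof -
  assume h: "labs z \<le> 0"
  have "z \<le> 0" using labs_ge(1)[of z] h by (rule order_trans)
  moreover have "- z \<le> 0" using labs_ge(2)[of z] h by (rule order_trans)
  ultimately show "z = 0" by (metis antisym neg_le_0_iff_le)
qed

lemma riesz:
  fixes z v1 v2 :: "'a::banach_lattice"
  assumes "0 \<le> v1" "0 \<le> v2" "labs z \<le> v1 + v2"
  shows "\<exists>z1 z2. z = z1 + z2 \<and> labs z1 \<le> v1 \<and> labs z2 \<le> v2"
proof -
  define z1 where "z1 = sup (inf z v1) (- v1)"
  have zle: "z \<le> v1 + v2" "- z \<le> v1 + v2" using labs_ge[of z] assms(3) by auto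
  have a: "z1 \<le> v1" unfolding z1_def using assms(1)
    by (meson inf_le2 neg_le_0_iff_le order_trans sup_least)
  have b: "- z1 \<le> v1" unfolding z1_def
    by (meson minus_le_iff sup_ge2)
  have c: "z - z1 \<le> v2"
  proof -
    have "z - v2 \<le> inf z v1" using assms(2) zle
      by (simp add: diff_le_eq le_add_same_cancel1 add.commute)
    also have "\<dots> \<le> z1" unfolding z1_def by simp
    finally show ?thesis by (simp add: diff_le_eq add.commute)
  qed
  have d: "- (z - z1) \<le> v2"
  proof -
    have "inf z v1 \<le> z + v2" using assms(2)
      by (meson inf_le1 le_add_same_cancel1 order_trans)
    moreover have "- v1 \<le> z + v2" using add_right_mono[OF zle(2), of "z - v1"]
      by (simp add: algebra_simps)
    ultimately have "z1 \<le> z + v2" unfolding z1_def by simp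
    then show ?thesis by (simp add: algebra_simps)
  qed
  show ?thesis
    by (rule exI[of _ z1], rule exI[of _ "z - z1"])
       (use a b c d in \<open>auto simp: labs_def\<close>)
qed

lemma ac_bdd:
  fixes f :: "'a::banach_lattice \<Rightarrow>\<^sub>L real"
  shows "0 \<le> y \<Longrightarrow> bdd_above {\<bar>blinfun_apply f z\<bar> | z. labs z \<le> y}"
proof (rule bdd_aboveI, clarify)
  fix z assume "0 \<le> y" "labs z \<le> y"
  then have "norm z \<le> norm y" by (rule labs_norm)
  then show "\<bar>blinfun_apply f z\<bar> \<le> norm f * norm y"
    using norm_blinfun[of f z] by (metis mult_left_mono norm_ge_zero order_trans real_norm_def)
qed

lemma ac_ne:
  fixes y :: "'a::banach_lattice"
  assumes "0 \<le> y" shows "{\<bar>blinfun_apply f z\<bar> | z. labs z \<le> y} \<noteq> {}"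
proof -
  have "labs (0::'a) \<le> y" using assms by (simp add: labs_def)
  then show ?thesis by blast
qed

lemma ac_ge: "0 \<le> y \<Longrightarrow> labs z \<le> y \<Longrightarrow> \<bar>blinfun_apply f z\<bar> \<le> dual_abs_cone f y"
  unfolding dual_abs_cone_def by (rule cSup_upper) (auto intro: ac_bdd)

lemma ac_le: "0 \<le> y \<Longrightarrow> (\<And>z. labs z \<le> y \<Longrightarrow> \<bar>blinfun_apply f z\<bar> \<le> B) \<Longrightarrow> dual_abs_cone f y \<le> B"
  unfolding dual_abs_cone_def by (rule cSup_least) (use ac_ne in blast, blast)

lemma ac_nonneg:
  fixes y :: "'a::banach_lattice"
  shows "0 \<le> y \<Longrightarrow> 0 \<le> dual_abs_cone f y"
  using ac_ge[of y 0 f] by (simp add: labs_def)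

lemma ac_mono: "0 \<le> y \<Longrightarrow> y \<le> y' \<Longrightarrow> dual_abs_cone f y \<le> dual_abs_cone f y'"
  by (rule ac_le) (auto intro!: ac_ge)

lemma ac_subadd:
  assumes "0 \<le> y1" "0 \<le> y2"
  shows "dual_abs_cone f (y1 + y2) \<le> dual_abs_cone f y1 + dual_abs_cone f y2"
proof (rule ac_le)
  show "0 \<le> y1 + y2" using assms by simp
  fix z assume "labs z \<le> y1 + y2"
  then obtain z1 z2 where z: "z = z1 + z2" "labs z1 \<le> y1" "labs z2 \<le> y2"
    using riesz assms by blast
  have "\<bar>blinfun_apply f z\<bar> \<le> \<bar>blinfun_apply f z1\<bar> + \<bar>blinfun_apply f z2\<bar>"
    by (simp add: z blinfun.add_right abs_triangle_ineq)
  also have "\<dots> \<le> dual_abs_cone f y1 + dual_abs_cone f y2"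
    using ac_ge[OF assms(1) z(2), of f] ac_ge[OF assms(2) z(3), of f] by simp
  finally show "\<bar>blinfun_apply f z\<bar> \<le> dual_abs_cone f y1 + dual_abs_cone f y2" .
qed

lemma ic_bdd:
  fixes h u :: "'a::banach_lattice \<Rightarrow> real"
  assumes hpos: "\<And>w. 0 \<le> w \<Longrightarrow> 0 \<le> h w" and upos: "\<And>w. 0 \<le> w \<Longrightarrow> 0 \<le> u w"
  shows "bdd_below {h y + u (x - y) | y. 0 \<le> y \<and> y \<le> x}"
proof (rule bdd_belowI, clarify)
  fix y assume "0 \<le> y" "y \<le> x"
  then show "0 \<le> h y + u (x - y)" using hpos upos by (simp add: add_nonneg_nonneg)
qed

lemma ic_le:
  fixes h u :: "'a::banach_lattice \<Rightarrow> real"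
  assumes hpos: "\<And>w. 0 \<le> w \<Longrightarrow> 0 \<le> h w" and upos: "\<And>w. 0 \<le> w \<Longrightarrow> 0 \<le> u w"
    and "0 \<le> w" "w \<le> x"
  shows "dual_inf_cone h u x \<le> h w + u (x - w)"
  unfolding dual_inf_cone_def
  by (rule cInf_lower) (use assms in blast, rule ic_bdd[OF hpos upos])

lemma ic_nonneg:
  fixes h u :: "'a::banach_lattice \<Rightarrow> real"
  assumes hpos: "\<And>w. 0 \<le> w \<Longrightarrow> 0 \<le> h w" and upos: "\<And>w. 0 \<le> w \<Longrightarrow> 0 \<le> u w"
    and x: "0 \<le> x"
  shows "0 \<le> dual_inf_cone h u x"
  unfolding dual_inf_cone_def
proof (rule cInf_greatest)
  show "{h y + u (x - y) | y. 0 \<le> y \<and> y \<le> x} \<noteq> {}" using x by blast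
  fix r assume "r \<in> {h y + u (x - y) | y. 0 \<le> y \<and> y \<le> x}"
  then show "0 \<le> r" using hpos upos by (auto simp: add_nonneg_nonneg)
qed

lemma ic_small:
  fixes h u :: "'a::banach_lattice \<Rightarrow> real"
  assumes x: "0 \<le> x" and lt: "dual_inf_cone h u x < d"
  shows "\<exists>w. 0 \<le> w \<and> w \<le> x \<and> h w + u (x - w) < d"
proof -
  have "{h y + u (x - y) | y. 0 \<le> y \<and> y \<le> x} \<noteq> {}" using x by blast
  from cInf_lessD[OF this lt[unfolded dual_inf_cone_def]] show ?thesis by blast
qed

lemma ic_subadd:
  fixes h u :: "'a::banach_lattice \<Rightarrow> real"
  assumes hpos: "\<And>w. 0 \<le> w \<Longrightarrow> 0 \<le> h w" and upos: "\<And>w. 0 \<le> w \<Longrightarrow> 0 \<le> u w"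
    and hsub: "\<And>a b. 0 \<le> a \<Longrightarrow> 0 \<le> b \<Longrightarrow> h (a + b) \<le> h a + h b"
    and uadd: "\<And>a b. u (a + b) = u a + u b"
    and x1: "0 \<le> x1" and x2: "0 \<le> x2"
  shows "dual_inf_cone h u (x1 + x2) \<le> dual_inf_cone h u x1 + dual_inf_cone h u x2"
proof -
  define S where "S x = {h y + u (x - y) | y. 0 \<le> y \<and> y \<le> x}" for x
  define G where "G = dual_inf_cone h u (x1 + x2)"
  have geq: "dual_inf_cone h u x = Inf (S x)" for x by (simp add: dual_inf_cone_def S_def)
  have Sne: "S x \<noteq> {}" if "0 \<le> x" for x
  proof -
    have "h 0 + u (x - 0) \<in> S x" unfolding S_def using that by blast
    then show ?thesis by blast
  qed
  have key: "G - (h w2 + u (x2 - w2)) \<le> Inf (S x1)"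
    if w2: "0 \<le> w2" "w2 \<le> x2" for w2
  proof (rule cInf_greatest)
    show "S x1 \<noteq> {}" by (rule Sne[OF x1])
    fix r assume "r \<in> S x1"
    then obtain w1 where w1: "0 \<le> w1" "w1 \<le> x1" "r = h w1 + u (x1 - w1)" unfolding S_def by blast
    have G1: "G \<le> h (w1 + w2) + u (x1 + x2 - (w1 + w2))" unfolding G_def
    proof (rule ic_le[OF hpos upos])
      show "0 \<le> w1 + w2" using w1(1) w2(1) by (rule add_nonneg_nonneg)
      show "w1 + w2 \<le> x1 + x2" using w1(2) w2(2) by (rule add_mono)
    qed
    have eq: "x1 + x2 - (w1 + w2) = (x1 - w1) + (x2 - w2)" by (simp add: algebra_simps)
    moreover have "u (x1 + x2 - (w1 + w2)) = u (x1 - w1) + u (x2 - w2)" unfolding eq by (rule uadd)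
    moreover have "h (w1 + w2) \<le> h w1 + h w2" using hsub w1(1) w2(1) by blast
    ultimately show "G - (h w2 + u (x2 - w2)) \<le> r" using w1(3) G1 by linarith
  qed
  have "G - Inf (S x1) \<le> Inf (S x2)"
  proof (rule cInf_greatest)
    show "S x2 \<noteq> {}" by (rule Sne[OF x2])
    fix r assume "r \<in> S x2"
    then obtain w2 where w2: "0 \<le> w2" "w2 \<le> x2" "r = h w2 + u (x2 - w2)" unfolding S_def by blast
    show "G - Inf (S x1) \<le> r" using key[OF w2(1,2)] w2(3) by linarith
  qed
  then show ?thesis unfolding G_def geq by linarith
qed

definition Dp :: "('a::banach_lattice \<Rightarrow> real) \<Rightarrow> ('a \<Rightarrow> real) \<Rightarrow> bool" where
  "Dp h c \<longleftrightarrow> (\<forall>y. 0 \<le> y \<longrightarrow> (\<forall>d>0. \<exists>v. 0 \<le> v \<and> v \<le> y \<and> h v + c (y - v) < d))"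

lemma Dp_add:
  fixes h1 h2 c :: "'a::banach_lattice \<Rightarrow> real"
  assumes D1: "Dp h1 c" and D2: "Dp h2 c"
    and mono1: "\<And>a b. 0 \<le> a \<Longrightarrow> a \<le> b \<Longrightarrow> h1 a \<le> h1 b"
    and csub: "\<And>a b. 0 \<le> a \<Longrightarrow> 0 \<le> b \<Longrightarrow> c (a + b) \<le> c a + c b"
  shows "Dp (\<lambda>v. h1 v + h2 v) c"
  unfolding Dp_def
proof (intro allI impI)
  fix y :: 'a and d :: real assume y: "0 \<le> y" and d: "0 < d"
  obtain w where w: "0 \<le> w" "w \<le> y" "h1 w + c (y - w) < d/2"
    using D1 y d unfolding Dp_def by (meson half_gt_zero)
  obtain w' where w': "0 \<le> w'" "w' \<le> w" "h2 w' + c (w - w') < d/2"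
    using D2 w d unfolding Dp_def by (meson half_gt_zero)
  have "c (y - w') \<le> c (y - w) + c (w - w')"
    using csub[of "y - w" "w - w'"] w w' by simp
  moreover have "h1 w' \<le> h1 w" using mono1 w' by blast
  moreover have "w' \<le> y" using w w' by (meson order_trans)
  ultimately show "\<exists>v\<ge>0. v \<le> y \<and> h1 v + h2 v + c (y - v) < d"
    using w w' by (intro exI[of _ w']) auto
qed

lemma disj_Dp:
  assumes "dual_disjoint f g"
  shows "Dp (dual_abs_cone f) (dual_abs_cone g)"
  unfolding Dp_def
proof (intro allI impI)
  fix y :: 'a and d :: real assume y: "0 \<le> y" and d: "0 < d"
  have "dual_inf_cone (dual_abs_cone f) (dual_abs_cone g) y < d"
    using assms y d unfolding dual_disjoint_def by simp
  from ic_small[OF y this] show "\<exists>v\<ge>0. v \<le> y \<and> dual_abs_cone f v + dual_abs_cone g (y - v) < d"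
    by blast
qed

lemma ac_zero: "dual_abs_cone f (0::'a::banach_lattice) = 0"
proof -
  have "dual_abs_cone f (0::'a) \<le> 0"
    by (rule ac_le) (auto dest: labs_le_zero)
  then show ?thesis using ac_nonneg[of "0::'a" f] by simp
qed

lemma disjoint_sum_le:
  fixes xs :: "nat \<Rightarrow> ('a::banach_lattice \<Rightarrow>\<^sub>L real)"
  assumes disj: "disjoint_seq xs" and up: "dual_nonneg u"
  shows "(\<forall>x. 0 \<le> x \<longrightarrow> (\<Sum>n<N. dual_inf_cone (dual_abs_cone (xs n)) (blinfun_apply u) x) \<le> u x)
     \<and> (\<forall>m\<ge>N. Dp (\<lambda>v. \<Sum>n<N. dual_abs_cone (xs n) v) (dual_abs_cone (xs m)))"
proof -
  define a where "a = (\<lambda>n. dual_abs_cone (xs n))"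
  define g where "g = (\<lambda>n. dual_inf_cone (a n) (blinfun_apply u))"
  have upos: "\<And>w. 0 \<le> w \<Longrightarrow> 0 \<le> blinfun_apply u w" using up unfolding dual_nonneg_def by blast
  have apos: "\<And>w. 0 \<le> w \<Longrightarrow> 0 \<le> a n w" for n unfolding a_def by (rule ac_nonneg)
  have amono: "\<And>v w. 0 \<le> v \<Longrightarrow> v \<le> w \<Longrightarrow> a n v \<le> a n w" for n unfolding a_def by (rule ac_mono)
  have asub: "\<And>v w. 0 \<le> v \<Longrightarrow> 0 \<le> w \<Longrightarrow> a n (v + w) \<le> a n v + a n w" for n
    unfolding a_def by (rule ac_subadd)
  have uadd: "\<And>v w. blinfun_apply u (v + w) = blinfun_apply u v + blinfun_apply u w"
    by (simp add: blinfun.add_right)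
  have gle: "\<And>w x. 0 \<le> w \<Longrightarrow> w \<le> x \<Longrightarrow> g n x \<le> a n w + u (x - w)" for n
    unfolding g_def by (rule ic_le[OF apos upos])
  have gsub: "\<And>v w. 0 \<le> v \<Longrightarrow> 0 \<le> w \<Longrightarrow> g n (v + w) \<le> g n v + g n w" for n
    unfolding g_def by (rule ic_subadd[OF apos upos asub uadd])
  have "(\<forall>x. 0 \<le> x \<longrightarrow> (\<Sum>n<N. g n x) \<le> u x) \<and> (\<forall>m\<ge>N. Dp (\<lambda>v. \<Sum>n<N. a n v) (a m))"
  proof (induction N)
    case 0
    have "Dp (\<lambda>v. 0) (a m)" for m
      unfolding Dp_def
    proof (intro allI impI)
      fix y :: 'a and d :: real assume "0 \<le> y" "0 < d"
      then show "\<exists>v\<ge>0. v \<le> y \<and> 0 + a m (y - v) < d"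
        by (intro exI[of _ y]) (simp add: a_def ac_zero)
    qed
    then show ?case using upos by simp
  next
    case (Suc N)
    have S1: "\<And>x. 0 \<le> x \<Longrightarrow> (\<Sum>n<N. g n x) \<le> u x" using Suc.IH by blast
    have S2: "\<And>m. m \<ge> N \<Longrightarrow> Dp (\<lambda>v. \<Sum>n<N. a n v) (a m)" using Suc.IH by blast
    have part1: "(\<Sum>n<Suc N. g n x) \<le> u x" if x: "0 \<le> x" for x
    proof (rule field_le_epsilon)
      fix e :: real assume e: "0 < e"
      obtain v where v: "0 \<le> v" "v \<le> x" "(\<Sum>n<N. a n v) + a N (x - v) < e"
        using S2[of N] x e unfolding Dp_def by blast
      have xv: "0 \<le> x - v" using v by simp
      have "(\<Sum>n<N. g n x) \<le> (\<Sum>n<N. g n (x - v) + g n v)"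
        using gsub[OF xv v(1)] by (intro sum_mono) simp
      also have "\<dots> = (\<Sum>n<N. g n (x - v)) + (\<Sum>n<N. g n v)" by (simp add: sum.distrib)
      also have "(\<Sum>n<N. g n v) \<le> (\<Sum>n<N. a n v)"
        using gle[OF v(1) order_refl] by (intro sum_mono) simp
      also have "(\<Sum>n<N. g n (x - v)) \<le> u (x - v)" using S1[OF xv] .
      finally have A: "(\<Sum>n<N. g n x) \<le> u (x - v) + (\<Sum>n<N. a n v)" by simp
      have B: "g N x \<le> a N (x - v) + u v"
        using gle[OF xv, of x N] v by simp
      have C: "u (x - v) + u v = u x" by (simp add: blinfun.diff_right)
      show "(\<Sum>n<Suc N. g n x) \<le> u x + e" using A B C v(3) by simp
    qed
    have part2: "Dp (\<lambda>v. \<Sum>n<Suc N. a n v) (a m)" if m: "m \<ge> Suc N" for m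
    proof -
      have "Dp (\<lambda>v. (\<Sum>n<N. a n v) + a N v) (a m)"
      proof (rule Dp_add)
        show "Dp (\<lambda>v. \<Sum>n<N. a n v) (a m)" using S2 m by simp
        show "Dp (a N) (a m)" unfolding a_def
          by (rule disj_Dp) (use disj m in \<open>auto simp: disjoint_seq_def\<close>)
        show "\<And>v w. 0 \<le> v \<Longrightarrow> v \<le> w \<Longrightarrow> (\<Sum>n<N. a n v) \<le> (\<Sum>n<N. a n w)"
          using amono by (intro sum_mono) auto
        show "\<And>v w. 0 \<le> v \<Longrightarrow> 0 \<le> w \<Longrightarrow> a m (v + w) \<le> a m v + a m w" by (rule asub)
      qed
      then show ?thesis by simp
    qed
    show ?case using part1 part2 by blast
  qed
  then show ?thesis by (simp only: g_def a_def)
qed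

lemma disjoint_uaw:
  fixes xs :: "nat \<Rightarrow> ('a::banach_lattice \<Rightarrow>\<^sub>L real)"
  assumes disj: "disjoint_seq xs"
  shows "uaw_star_tendsto xs 0"
  unfolding uaw_star_tendsto_def
proof (intro allI impI)
  fix u :: "'a \<Rightarrow>\<^sub>L real" and x :: 'a
  assume up: "dual_nonneg u"
  define g where "g = (\<lambda>n. dual_inf_cone (dual_abs_cone (xs n)) (blinfun_apply u))"
  have upos: "\<And>w. 0 \<le> w \<Longrightarrow> 0 \<le> blinfun_apply u w" using up unfolding dual_nonneg_def by blast
  have lim: "(\<lambda>n. g n y) \<longlonglongrightarrow> 0" if y: "0 \<le> y" for y
  proof -
    have "summable (\<lambda>n. g n y)"
    proof (rule summableI_nonneg_bounded)
      show "0 \<le> g n y" for n unfolding g_def by (rule ic_nonneg[OF ac_nonneg upos y])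
      show "(\<Sum>n<N. g n y) \<le> u y" for N
        using disjoint_sum_le[OF disj up, of N] y unfolding g_def by blast
    qed
    then show ?thesis by (rule summable_LIMSEQ_zero)
  qed
  have "0 \<le> lpos x" "0 \<le> lneg x" unfolding lpos_def lneg_def by simp_all
  then have "(\<lambda>n. g n (lpos x) - g n (lneg x)) \<longlonglongrightarrow> 0 - 0"
    by (intro tendsto_diff lim)
  then show "(\<lambda>n. cone_ext (dual_inf_cone (dual_abs_cone (xs n - 0)) (blinfun_apply u)) x) \<longlonglongrightarrow> 0"
    by (simp add: cone_ext_def g_def)
qed

theorem lemma2p2:
  shows "(UGP TYPE('a::banach_lattice) \<longrightarrow> DGP TYPE('a)) \<and> (DGP TYPE('a) \<longrightarrow> WGP TYPE('a))"
proof (intro conjI impI)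
  assume U: "UGP TYPE('a)"
  show "DGP TYPE('a)" unfolding DGP_def
  proof (intro allI impI)
    fix xs :: "nat \<Rightarrow> ('a \<Rightarrow>\<^sub>L real)"
    assume "norm_bounded_seq xs \<and> disjoint_seq xs"
    then show "weak_tendsto xs 0" using U disjoint_uaw unfolding UGP_def by blast
  qed
next
  assume D: "DGP TYPE('a)"
  show "WGP TYPE('a)" unfolding WGP_def
  proof (intro allI impI)
    fix xs :: "nat \<Rightarrow> ('a \<Rightarrow>\<^sub>L real)"
    assume h: "disjoint_seq xs \<and> weak_star_tendsto xs 0"
    have "\<exists>B. \<forall>n. \<bar>xs n x\<bar> \<le> B" for x
    proof -
      have "(\<lambda>n. xs n x) \<longlonglongrightarrow> 0" using h unfolding weak_star_tendsto_def by auto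
      then have "Bseq (\<lambda>n. xs n x)" by (intro convergent_imp_Bseq convergentI)
      then show ?thesis unfolding Bseq_def by (metis real_norm_def)
    qed
    then have "norm_bounded_seq xs" unfolding norm_bounded_seq_def by (rule ubp)
    then show "weak_tendsto xs 0" using D h unfolding DGP_def by blast
  qed
qed

end
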